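(* Assume (H1) and (H2) hold. Let $R>0$, $S>0$, let $K=K_y\times K_z\subset\mathbb R^d$ be a cube, and let $\eta\in C_0^\infty(\mathbb R^{d-m})$ satisfy $0\le\eta\le1$ and $\eta=1$ on $K_z$. If $\sigma_n\in\mathcal P_R(V)$ converges weakly to $\sigma\in\mathcal P_R(V)$, then for all $i,j$ $$\lim_{n\to\infty}\ \sup_{\mu\in\mathcal M_{K,S}(\eta)}\int_K\Big(|a^{ij}(x,\sigma_n)-a^{ij}(x,\sigma)|+|b^i(x,\sigma_n)-b^i(x,\sigma)|\Big)\mu(dx)=0.$$
   Context: Standing setting. Let $d\ge 1$. For every Borel probability measure $\mu$ on $\mathbb R^d$ there are given Borel functions $x\mapsto a^{ij}(x,\mu)$ and $x\mapsto b^i(x,\mu)$ on $\mathbb R^d$, $1\le i,j\le d$, such that the matrix $A(x,\mu)=(a^{ij}(x,\mu))_{i,j}$ is symmetric and nonnegative definite. Fix $V\in C^2(\mathbb R^d)$ with $V\ge0$ and $V(x)\to+\infty$ as $|x|\to\infty$. For $R>0$, $\mathcal P_R(V)$ is the set of Borel probability measures $\mu$ on $\mathbb R^d$ with $\int V\,d\mu\le R$; $\mathcal P(V)$ is the set of Borel probability measures $\mu$ with $V\in L^1(\mu)$. A sequence $\mu_n\in\mathcal P(V)$ converges $V$-weakly to $\mu\in\mathcal P(V)$ if $\int f\,d\mu_n\to\int f\,d\mu$ for every continuous $f$ with $f(x)/V(x)\to0$ as $|x|\to\infty$. Fix an integer $0\le m\le d$ and write $x=(y,z)$ with $y=(x_1,\dots,x_m)\in\mathbb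 R^m$, $z=(x_{m+1},\dots,x_d)\in\mathbb R^{d-m}$ (if $m=0$ there is no $y$; if $m=d$ there is no $z$). Cubes have edges parallel to the coordinate axes; a cube $K\subset\mathbb R^d$ is written $K=K_y\times K_z$. (H1.1) For every $R>0$ and every cube $K\subset\mathbb R^d$ there is $\lambda_{K,R}>0$ such that $\sum_{i,j\le m}a^{ij}(x,\mu)\xi_i\xi_j\ge\lambda_{K,R}|\xi|^2$ for all $x\in K$, $\mu\in\mathcal P_R(V)$, $\xi\in\mathbb R^m$. (H1.2) For every $R>0$, every cube $K$ and all $i,j$: $\sup_{x\in K,\ \mu\in\mathcal P_R(V)}\big(|a^{ij}(x,\mu)|+|b^i(x,\mu)|\big)<\infty$. (H1.3) For every $R>0$ and every cube $K=K_y\times K_z$ there is a nonnegative continuous monotone function $\omega_{K,R}$ on $[0,\infty)$ with $\omega_{K,R}(0)=0$ such that for all $i,j$ and all $z,z'\in K_z$: $\sup_{y\in K_y,\ \mu\in\mathcal P_R(V)}\big(|a^{ij}(y,z,\mu)-a^{ij}(y,z',\mu)|+|b^i(y,z,\mu)-b^i(y,z',\mu)|\big)\le\omega_{K,R}(|z-z'|)$. (H1) means (H1.1), (H1.2), (H1.3) together. (H2) For every $R>0$, every sequence $\mu_n\in\mathcal P_R(V)$ converging $V$-weakly to some $\mu\in\mathcal P_R(V)$, and all $i,j$: – if $m=0$: $|a^{ij}(x,\mu_n)-a^{ij}(x,\mu)|+|b^i(x,\mu_n)-b^i(x,\mu)|\to0$ for every $x\in\mathbb R^d$; – if $m=1$: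 for a fixed number $\gamma>0$, for every cube $K_y\subset\mathbb R^m$ and every $z\in\mathbb R^{d-m}$, $\int_{K_y}\big(|a^{ij}(y,z,\mu)-a^{ij}(y,z,\mu_n)|^{1+\gamma}+|b^i(y,z,\mu)-b^i(y,z,\mu_n)|^{1+\gamma}\big)dy\to0$; – if $m\ge2$: for every cube $K_y\subset\mathbb R^m$ and every $z\in\mathbb R^{d-m}$, $\int_{K_y}\big(|a^{ij}(y,z,\mu)-a^{ij}(y,z,\mu_n)|^{m}+|b^i(y,z,\mu)-b^i(y,z,\mu_n)|^{m}\big)dy\to0$. The set $\mathcal M_{K,S}(\eta)$: for a cube $K=K_y\times K_z$, a number $S>0$ and $\eta\in C_0^\infty(\mathbb R^{d-m})$ with $0\le\eta\le1$, $\mathcal M_{K,S}(\eta)$ is the set of Borel probability measures $\mu$ on $\mathbb R^d$ such that the projection of $\eta\mu$ onto $\mathbb R^m_y$ (the measure $B\mapsto\int_{B\times\mathbb R^{d-m}}\eta(z)\,\mu(dy\,dz)$) has a density $\varrho$ with respect to Lebesgue measure satisfying $\|\varrho\|_{L^r(K_y)}\le S$, where $r=m/(m-1)$ if $m\ge2$ and $r=(1+\gamma)/\gamma$ if $m=1$ ($\gamma$ from (H2)). If $m=0$, $\mathcal M_{K,S}(\eta)$ is the set of all Borel probability measures on $\mathbb R^d$. *)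

theory Defs
  imports "HOL-Probability.Probability"
begin

text \<open>Points of R^d are vectors real^'n, d = CARD('n). The y-coordinates are the
  indices in a set Y (m = card Y), the z-coordinates are the remaining indices.\<close>

definition borel_prob :: "'a::topological_space measure \<Rightarrow> bool" where
  "borel_prob \<mu> \<longleftrightarrow> prob_space \<mu> \<and> sets \<mu> = sets borel"

definition PR :: "('a::topological_space \<Rightarrow> real) \<Rightarrow> real \<Rightarrow> 'a measure set" where
  "PR V R = {\<mu>. borel_prob \<mu> \<and> (\<integral>\<^sup>+ x. ennreal (V x) \<partial>\<mu>) \<le> ennreal R}"

definition PV :: "('a::topological_space \<Rightarrow> real) \<Rightarrow> 'a measure set" where
  "PV V = {\<mu>. borel_prob \<mu> \<and> integrable \<mu> V}"

definition Vweak_conv ::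
  "('a::real_normed_vector \<Rightarrow> real) \<Rightarrow> (nat \<Rightarrow> 'a measure) \<Rightarrow> 'a measure \<Rightarrow> bool" where
  "Vweak_conv V \<mu>s \<mu> \<longleftrightarrow> (\<forall>n. \<mu>s n \<in> PV V) \<and> \<mu> \<in> PV V \<and>
     (\<forall>f. continuous_on UNIV f \<and> ((\<lambda>x. f x / V x) \<longlongrightarrow> 0) at_infinity \<longrightarrow>
        (\<lambda>n. integral\<^sup>L (\<mu>s n) f) \<longlonglongrightarrow> integral\<^sup>L \<mu> f)"

definition weak_conv_bc :: "(nat \<Rightarrow> 'a::topological_space measure) \<Rightarrow> 'a measure \<Rightarrow> bool" where
  "weak_conv_bc \<mu>s \<mu> \<longleftrightarrow> (\<forall>f::'a \<Rightarrow> real. continuous_on UNIV f \<and> bounded (range f) \<longrightarrow>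
        (\<lambda>n. integral\<^sup>L (\<mu>s n) f) \<longlonglongrightarrow> integral\<^sup>L \<mu> f)"

definition C2 :: "(real^'n \<Rightarrow> real) \<Rightarrow> bool" where
  "C2 f \<longleftrightarrow> (\<exists>g :: 'n \<Rightarrow> real^'n \<Rightarrow> real. \<exists>h :: 'n \<Rightarrow> 'n \<Rightarrow> real^'n \<Rightarrow> real.
      (\<forall>x. (f has_derivative (\<lambda>v. \<Sum>i\<in>UNIV. v$i * g i x)) (at x)) \<and>
      (\<forall>i x. (g i has_derivative (\<lambda>v. \<Sum>j\<in>UNIV. v$j * h i j x)) (at x)) \<and>
      (\<forall>i j. continuous_on UNIV (h i j)))"

coinductive smooth :: "(real^'n \<Rightarrow> real) \<Rightarrow> bool" where
  "(\<And>x. (f has_derivative (\<lambda>v. \<Sum>i\<in>UNIV. v$i * g i x)) (at x)) \<Longrightarrow>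
   (\<And>i. smooth (g i)) \<Longrightarrow> smooth f"

text \<open>A function eta in C_0^\<infinity>(R^{d-m}) with 0 \<le> eta \<le> 1, represented as the function
  x \<mapsto> eta(z(x)) on R^d.\<close>
definition z_cutoff :: "'n set \<Rightarrow> (real^'n \<Rightarrow> real) \<Rightarrow> bool" where
  "z_cutoff Y \<eta> \<longleftrightarrow> smooth \<eta> \<and>
     (\<forall>x x'. (\<forall>i. i \<notin> Y \<longrightarrow> x$i = x'$i) \<longrightarrow> \<eta> x = \<eta> x') \<and>
     (\<exists>r. \<forall>x. \<eta> x \<noteq> 0 \<longrightarrow> (\<forall>i. i \<notin> Y \<longrightarrow> \<bar>x$i\<bar> \<le> r)) \<and>
     (\<forall>x. 0 \<le> \<eta> x \<and> \<eta> x \<le> 1)"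

definition cube :: "real^'n \<Rightarrow> real \<Rightarrow> (real^'n) set" where
  "cube c h = {x. \<forall>i. c$i \<le> x$i \<and> x$i \<le> c$i + h}"

text \<open>Its y-part K_y, as a set of points of R^Y (functions on Y).\<close>
definition ycube :: "'n set \<Rightarrow> real^'n \<Rightarrow> real \<Rightarrow> ('n \<Rightarrow> real) set" where
  "ycube Y c h = {y. \<forall>i\<in>Y. c$i \<le> y i \<and> y i \<le> c$i + h}"

text \<open>Its z-part K_z, as the set of x whose z-coordinates lie in it.\<close>
definition zcube :: "'n set \<Rightarrow> real^'n \<Rightarrow> real \<Rightarrow> (real^'n) set" where
  "zcube Y c h = {x. \<forall>i. i \<notin> Y \<longrightarrow> c$i \<le> x$i \<and> x$i \<le> c$i + h}"

abbreviation lebY :: "'n set \<Rightarrow> ('n \<Rightarrow> real) measure" where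
  "lebY Y \<equiv> Pi\<^sub>M Y (\<lambda>_. lborel)"

definition yproj :: "'n set \<Rightarrow> real^'n \<Rightarrow> ('n \<Rightarrow> real)" where
  "yproj Y x = restrict (\<lambda>i. x$i) Y"

definition yjoin :: "'n set \<Rightarrow> ('n \<Rightarrow> real) \<Rightarrow> real^'n \<Rightarrow> real^'n" where
  "yjoin Y y x0 = (\<chi> i. if i \<in> Y then y i else x0$i)"

definition r_exp :: "nat \<Rightarrow> real \<Rightarrow> real" where
  "r_exp m \<gamma> = (if m = 1 then (1 + \<gamma>) / \<gamma> else real m / (real m - 1))"

definition p_exp :: "nat \<Rightarrow> real \<Rightarrow> real" where
  "p_exp m \<gamma> = (if m = 1 then 1 + \<gamma> else real m)"

definition Mset :: "'n set \<Rightarrow> real \<Rightarrow> real^'n \<Rightarrow> real \<Rightarrow> real \<Rightarrow> (real^'n \<Rightarrow> real)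
    \<Rightarrow> (real^'n) measure set" where
  "Mset Y \<gamma> c h S \<eta> = {\<mu>. borel_prob \<mu> \<and>
     (Y \<noteq> {} \<longrightarrow> (\<exists>\<rho>. \<rho> \<in> borel_measurable (lebY Y) \<and> (\<forall>y. 0 \<le> \<rho> y) \<and>
        distr (density \<mu> (\<lambda>x. ennreal (\<eta> x))) (lebY Y) (yproj Y)
          = density (lebY Y) (\<lambda>y. ennreal (\<rho> y)) \<and>
        (\<integral>\<^sup>+ y. indicator (ycube Y c h) y * ennreal (\<rho> y powr r_exp (card Y) \<gamma>) \<partial>lebY Y)
          \<le> ennreal (S powr r_exp (card Y) \<gamma>)))}"

definition coeff_ok :: "('n \<Rightarrow> 'n \<Rightarrow> real^'n \<Rightarrow> (real^'n) measure \<Rightarrow> real)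
    \<Rightarrow> ('n \<Rightarrow> real^'n \<Rightarrow> (real^'n) measure \<Rightarrow> real) \<Rightarrow> bool" where
  "coeff_ok a b \<longleftrightarrow> (\<forall>\<mu>. borel_prob \<mu> \<longrightarrow>
     (\<forall>i j. (\<lambda>x. a i j x \<mu>) \<in> borel_measurable borel) \<and>
     (\<forall>i. (\<lambda>x. b i x \<mu>) \<in> borel_measurable borel) \<and>
     (\<forall>i j x. a i j x \<mu> = a j i x \<mu>) \<and>
     (\<forall>x \<xi>. 0 \<le> (\<Sum>i\<in>UNIV. \<Sum>j\<in>UNIV. a i j x \<mu> * \<xi>$i * \<xi>$j)))"

definition H1_1 where
  "H1_1 V Y a \<longleftrightarrow> (\<forall>R c h. h > 0 \<longrightarrow> (\<exists>lam>0. \<forall>x\<in>cube c h. \<forall>\<mu>\<in>PR V R. \<forall>\<xi>::'n \<Rightarrow> real.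
      (\<Sum>i\<in>Y. \<Sum>j\<in>Y. a i j x \<mu> * \<xi> i * \<xi> j) \<ge> lam * (\<Sum>i\<in>Y. (\<xi> i)\<^sup>2)))"

definition H1_2 where
  "H1_2 V a b \<longleftrightarrow> (\<forall>R c h i j. h > 0 \<longrightarrow> (\<exists>C. \<forall>x\<in>cube c h. \<forall>\<mu>\<in>PR V R.
      \<bar>a i j x \<mu>\<bar> + \<bar>b i x \<mu>\<bar> \<le> C))"

text \<open>For x, x' with the same y-part, the distance of their z-parts is norm (x - x').\<close>
definition H1_3 where
  "H1_3 V Y a b \<longleftrightarrow> (\<forall>R c h. h > 0 \<longrightarrow> (\<exists>\<omega>::real \<Rightarrow> real.
      continuous_on {0..} \<omega> \<and> mono_on {0..} \<omega> \<and> (\<forall>t\<ge>0. 0 \<le> \<omega> t) \<and> \<omega> 0 = 0 \<and>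
      (\<forall>i j. \<forall>x\<in>cube c h. \<forall>x'\<in>cube c h. \<forall>\<mu>\<in>PR V R. (\<forall>k\<in>Y. x$k = x'$k) \<longrightarrow>
         \<bar>a i j x \<mu> - a i j x' \<mu>\<bar> + \<bar>b i x \<mu> - b i x' \<mu>\<bar> \<le> \<omega> (norm (x - x')))))"

definition H2 where
  "H2 V Y \<gamma> a b \<longleftrightarrow> (\<forall>R \<mu>s \<mu>. (\<forall>n. \<mu>s n \<in> PR V R) \<and> \<mu> \<in> PR V R \<and> Vweak_conv V \<mu>s \<mu> \<longrightarrow>
     (\<forall>i j. (if Y = {} then
        (\<forall>x. (\<lambda>n. \<bar>a i j x (\<mu>s n) - a i j x \<mu>\<bar> + \<bar>b i x (\<mu>s n) - b i x \<mu>\<bar>) \<longlonglongrightarrow> 0)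
      else
        (\<forall>c h x0. h > 0 \<longrightarrow>
          (\<lambda>n. \<integral>\<^sup>+ y. indicator (ycube Y c h) y *
              ennreal (\<bar>a i j (yjoin Y y x0) \<mu> - a i j (yjoin Y y x0) (\<mu>s n)\<bar> powr p_exp (card Y) \<gamma>
                     + \<bar>b i (yjoin Y y x0) \<mu> - b i (yjoin Y y x0) (\<mu>s n)\<bar> powr p_exp (card Y) \<gamma>)
              \<partial>lebY Y) \<longlonglongrightarrow> 0))))"

end

theory Submission
  imports Defs
begin



lemma young_simple:
  fixes u v p r :: real
  assumes u: "0 \<le> u" and v: "0 \<le> v" and p: "p > 0" and r: "r > 0" and pr: "1/p + 1/r = 1"
  shows "u * v \<le> u powr p + v powr r"
proof -
  have pr1: "p / r = p - 1" using pr p r by (simp add: field_simps)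
  have rp1: "r / p = r - 1" using pr p r by (simp add: field_simps)
  show ?thesis
  proof (cases "v powr r \<le> u powr p")
    case True
    show ?thesis
    proof (cases "u = 0")
      case True then show ?thesis using v by simp
    next
      case False
      then have u0: "u > 0" using u by simp
      have "v = (v powr r) powr (1/r)" using v r by (simp add: powr_powr)
      also have "\<dots> \<le> (u powr p) powr (1/r)" using True r by (intro powr_mono2) auto
      also have "\<dots> = u powr (p - 1)" using pr1 by (simp add: powr_powr)
      finally have "u * v \<le> u * u powr (p - 1)" using u by (simp add: mult_left_mono)
      also have "\<dots> = u powr p" using u0 by (simp add: powr_diff)
      finally show ?thesis using v by (smt (verit) powr_ge_zero)
    qed
  next
    case False
    show ?thesis
    proof (cases "v = 0")
      case True then show ?thesis using u by simp
    next
      case F2: False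
      then have v0: "v > 0" using v by simp
      have "u = (u powr p) powr (1/p)" using u p by (simp add: powr_powr)
      also have "\<dots> \<le> (v powr r) powr (1/p)" using False p by (intro powr_mono2) auto
      also have "\<dots> = v powr (r - 1)" using rp1 by (simp add: powr_powr)
      finally have "u * v \<le> v powr (r - 1) * v" using v by (simp add: mult_right_mono)
      also have "\<dots> = v powr r" using v0 by (simp add: powr_diff)
      finally show ?thesis using u by (smt (verit) powr_ge_zero)
    qed
  qed
qed

lemma young_scaled:
  fixes u v p r t :: real
  assumes u: "0 \<le> u" and v: "0 \<le> v" and p: "p > 0" and r: "r > 0" and pr: "1/p + 1/r = 1"
    and t: "t > 0"
  shows "u * v \<le> t powr p * u powr p + v powr r / t powr r"
proof -
  have "u * v = (t * u) * (v / t)" using t by simp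
  also have "\<dots> \<le> (t*u) powr p + (v/t) powr r"
    by (rule young_simple) (use u v p r pr t in auto)
  also have "\<dots> = t powr p * u powr p + v powr r / t powr r"
    using u v t by (simp add: powr_mult powr_divide)
  finally show ?thesis .
qed

lemma exps:
  assumes "Y \<noteq> {}" "finite Y" "\<gamma> > 0"
  shows "p_exp (card Y) \<gamma> > 0" "r_exp (card Y) \<gamma> > 0"
    "1 / p_exp (card Y) \<gamma> + 1 / r_exp (card Y) \<gamma> = 1"
proof -
  have c: "card Y \<ge> 1" using assms by (simp add: Suc_le_eq card_gt_0_iff)
  show "p_exp (card Y) \<gamma> > 0" "r_exp (card Y) \<gamma> > 0"
    "1 / p_exp (card Y) \<gamma> + 1 / r_exp (card Y) \<gamma> = 1"
  proof (atomize (full), cases "card Y = 1")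
    case True then show "0 < p_exp (card Y) \<gamma> \<and> 0 < r_exp (card Y) \<gamma> \<and> 1 / p_exp (card Y) \<gamma> + 1 / r_exp (card Y) \<gamma> = 1"
      using assms by (simp add: p_exp_def r_exp_def field_simps)
  next
    case False
    then have "real (card Y) \<ge> 2" using c by linarith
    then show "0 < p_exp (card Y) \<gamma> \<and> 0 < r_exp (card Y) \<gamma> \<and> 1 / p_exp (card Y) \<gamma> + 1 / r_exp (card Y) \<gamma> = 1"
      using False by (simp add: p_exp_def r_exp_def field_simps)
  qed
qed

lemma smooth_cont: "smooth f \<Longrightarrow> continuous_on UNIV f"
  by (erule smooth.cases) (auto intro!: continuous_at_imp_continuous_on has_derivative_continuous)

lemma C2_cont: "C2 f \<Longrightarrow> continuous_on UNIV f"
proof -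
  assume "C2 f"
  then obtain g where g: "\<forall>x. (f has_derivative (\<lambda>v. \<Sum>i\<in>UNIV. v$i * g i x)) (at x)"
    unfolding C2_def by blast
  show ?thesis
    by (rule continuous_at_imp_continuous_on) (use g has_derivative_continuous in blast)
qed



lemma PR_facts:
  fixes V :: "'a::topological_space \<Rightarrow> real"
  assumes Vm: "V \<in> borel_measurable borel" and V0: "\<forall>x. 0 \<le> V x" and mu: "\<mu> \<in> PR V R" and R: "R > 0"
  shows "prob_space \<mu>" "sets \<mu> = sets borel" "integrable \<mu> V" "integral\<^sup>L \<mu> V \<le> R" "\<mu> \<in> PV V"
proof -
  show ps: "prob_space \<mu>" and s: "sets \<mu> = sets borel" using mu by (auto simp: PR_def borel_prob_def)
  have Vm': "V \<in> borel_measurable \<mu>" using Vm by (subst measurable_cong_sets[OF s refl])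
  have le: "(\<integral>\<^sup>+ x. ennreal (V x) \<partial>\<mu>) \<le> ennreal R" using mu by (simp add: PR_def)
  show int: "integrable \<mu> V"
    using Vm' le V0 by (intro integrableI_bounded) (auto simp: top_unique intro: le_less_trans)
  have "ennreal (integral\<^sup>L \<mu> V) = (\<integral>\<^sup>+ x. ennreal (V x) \<partial>\<mu>)"
    using int V0 by (subst nn_integral_eq_integral) auto
  with le have "ennreal (integral\<^sup>L \<mu> V) \<le> ennreal R" by simp
  moreover have "R \<ge> 0" using R by simp
  ultimately show "integral\<^sup>L \<mu> V \<le> R" by (simp add: ennreal_le_iff)
  show "\<mu> \<in> PV V" using mu int by (simp add: PR_def PV_def)
qed
lemma tri_helper:
  fixes A B F G q e :: real
  assumes "\<bar>A - B\<bar> < e/2" "\<bar>F - A\<bar> \<le> q" "\<bar>G - B\<bar> \<le> q" "q = e/4"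
  shows "\<bar>F - G\<bar> < e"
  using assms unfolding abs_less_iff abs_le_iff by linarith

lemma tail_bound:
  fixes f V :: "'a::real_normed_vector \<Rightarrow> real"
  assumes lim: "((\<lambda>x. f x / V x) \<longlongrightarrow> 0) at_infinity" and Vinf: "filterlim V at_top at_infinity"
    and e: "e > 0"
  shows "\<exists>M. \<forall>x. M \<le> norm x \<longrightarrow> \<bar>f x\<bar> \<le> e * V x"
proof -
  have "eventually (\<lambda>x. dist (f x / V x) 0 < e) at_infinity" using lim e by (rule tendstoD)
  moreover have "eventually (\<lambda>x. V x \<ge> 1) at_infinity" using Vinf by (simp add: filterlim_at_top)
  ultimately have "eventually (\<lambda>x. \<bar>f x\<bar> \<le> e * V x) at_infinity"
  proof (rule eventually_elim2)
    fix x assume a: "dist (f x / V x) 0 < e" and b: "V x \<ge> 1"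
    then have "\<bar>f x\<bar> / V x < e" by (simp add: abs_divide)
    then show "\<bar>f x\<bar> \<le> e * V x" using b by (simp add: divide_less_eq)
  qed
  then show ?thesis by (simp add: eventually_at_infinity)
qed

lemma vweak:
  fixes V :: "real^'n \<Rightarrow> real"
  assumes Vc: "continuous_on UNIV V" and V0: "\<forall>x. 0 \<le> V x" and Vinf: "filterlim V at_top at_infinity"
    and s: "\<forall>n. \<sigma>s n \<in> PR V R" "\<sigma> \<in> PR V R" "weak_conv_bc \<sigma>s \<sigma>" and R: "R > 0"
  shows "Vweak_conv V \<sigma>s \<sigma>"
proof -
  have Vm: "V \<in> borel_measurable borel" using Vc by (rule borel_measurable_continuous_onI)
  note PF = PR_facts[OF Vm V0 _ R]
  have key: "\<bar>integral\<^sup>L \<mu> f - integral\<^sup>L \<mu> (\<lambda>x. f x * max 0 (min 1 (M + 1 - norm x)))\<bar> \<le> \<epsilon> * R"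
    if mu: "\<mu> \<in> PR V R" and fc: "continuous_on UNIV f" and eps: "\<epsilon> > 0"
      and M: "\<forall>x. M \<le> norm x \<longrightarrow> \<bar>f x\<bar> \<le> \<epsilon> * V x" and B: "\<forall>x. norm x \<le> M + 1 \<longrightarrow> \<bar>f x\<bar> \<le> B" and Bnn: "0 \<le> B"
    for \<mu> f \<epsilon> M B
  proof -
    define \<phi> where "\<phi> x = max 0 (min 1 (M + 1 - norm x))" for x :: "real^'n"
    interpret prob_space \<mu> using PF(1)[OF mu] .
    have sm: "sets \<mu> = sets borel" using PF(2)[OF mu] .
    have fm: "f \<in> borel_measurable \<mu>"
      using borel_measurable_continuous_onI[OF fc] by (subst measurable_cong_sets[OF sm refl])
    have phim: "\<phi> \<in> borel_measurable \<mu>"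
      unfolding \<phi>_def by (subst measurable_cong_sets[OF sm refl]) simp
    have bnd: "\<bar>f x\<bar> \<le> B + \<epsilon> * V x" for x
    proof (cases "norm x \<le> M + 1")
      case True then show ?thesis using B V0 eps by (smt (verit) mult_nonneg_nonneg)
    next
      case False then show ?thesis using M Bnn by (smt (verit))
    qed
    have intV: "integrable \<mu> V" using PF(3)[OF mu] .
    have intg: "integrable \<mu> (\<lambda>x. B + \<epsilon> * V x)" using intV by auto
    have intf: "integrable \<mu> f"
    proof (rule Bochner_Integration.integrable_bound[OF intg fm], rule AE_I2)
      fix x show "norm (f x) \<le> norm (B + \<epsilon> * V x)" using bnd[of x] by simp
    qed
    have phi01: "0 \<le> \<phi> x \<and> \<phi> x \<le> 1" for x by (simp add: \<phi>_def)
    have intfp: "integrable \<mu> (\<lambda>x. f x * (1 - \<phi> x))"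
    proof (rule Bochner_Integration.integrable_bound[OF intg], use fm phim in measurable, rule AE_I2)
      fix x
      have "\<bar>f x * (1 - \<phi> x)\<bar> \<le> \<bar>f x\<bar>"
        using phi01[of x] by (simp add: abs_mult mult_left_le)
      then show "norm (f x * (1 - \<phi> x)) \<le> norm (B + \<epsilon> * V x)" using bnd[of x] by simp
    qed
    have p1: "\<bar>f x * (1 - \<phi> x)\<bar> \<le> \<epsilon> * V x" for x
    proof (cases "M \<le> norm x")
      case True then show ?thesis using M unfolding \<phi>_def abs_mult
        by (smt (verit) mult_left_le mult_nonneg_nonneg)
    next
      case False then have "\<phi> x = 1" by (simp add: \<phi>_def)
      then show ?thesis using eps V0 by simp
    qed
    have "integral\<^sup>L \<mu> f - integral\<^sup>L \<mu> (\<lambda>x. f x * \<phi> x) = integral\<^sup>L \<mu> (\<lambda>x. f x * (1 - \<phi> x))"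
    proof -
      have "integrable \<mu> (\<lambda>x. f x * \<phi> x)"
        using Bochner_Integration.integrable_diff[OF intf intfp] by (simp add: algebra_simps)
      then show ?thesis using intf by (subst Bochner_Integration.integral_diff[symmetric]) (auto simp: algebra_simps)
    qed
    also have "\<bar>\<dots>\<bar> \<le> integral\<^sup>L \<mu> (\<lambda>x. \<bar>f x * (1 - \<phi> x)\<bar>)"
      by (rule integral_abs_bound)
    also have "\<dots> \<le> integral\<^sup>L \<mu> (\<lambda>x. \<epsilon> * V x)"
      using intfp intV p1 by (intro integral_mono) auto
    also have "\<dots> = \<epsilon> * integral\<^sup>L \<mu> V" by simp
    also have "\<dots> \<le> \<epsilon> * R" using PF(4)[OF mu] eps by simp
    finally show ?thesis unfolding \<phi>_def by simp
  qed
  show ?thesis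
    unfolding Vweak_conv_def
  proof (intro conjI allI impI)
    show "\<sigma>s n \<in> PV V" for n using PF(5) s by auto
    show "\<sigma> \<in> PV V" using PF(5) s by auto
    fix f :: "real^'n \<Rightarrow> real"
    assume fa: "continuous_on UNIV f \<and> ((\<lambda>x. f x / V x) \<longlongrightarrow> 0) at_infinity"
    show "(\<lambda>n. integral\<^sup>L (\<sigma>s n) f) \<longlonglongrightarrow> integral\<^sup>L \<sigma> f"
    proof (rule LIMSEQ_I)
      fix e :: real assume e: "e > 0"
      define \<epsilon> where "\<epsilon> = e / (4 * R)"
      have eps: "\<epsilon> > 0" using e R by (simp add: \<epsilon>_def)
      obtain M where M: "\<forall>x. M \<le> norm x \<longrightarrow> \<bar>f x\<bar> \<le> \<epsilon> * V x"
        using tail_bound[OF conjunct2[OF fa] Vinf eps] by blast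
      have "compact (f ` cball 0 (M + 1))"
        using fa by (intro compact_continuous_image) (auto intro: continuous_on_subset)
      then obtain B where B0: "B > 0" and B': "\<forall>y\<in>f ` cball 0 (M + 1). norm y \<le> B"
        using compact_imp_bounded bounded_pos by metis
      have B: "\<forall>x. norm x \<le> M + 1 \<longrightarrow> \<bar>f x\<bar> \<le> B" using B' by auto
      define g where "g x = f x * max 0 (min 1 (M + 1 - norm x))" for x :: "real^'n"
      have gc: "continuous_on UNIV g" unfolding g_def using fa
        by (intro continuous_intros) auto
      have gb: "bounded (range g)"
        unfolding bounded_iff
      proof (intro exI ballI)
        fix y assume "y \<in> range g"
        then obtain x where y: "y = g x" by auto
        show "norm y \<le> B"
        proof (cases "norm x \<le> M + 1")
          case True
          have a: "\<bar>f x\<bar> \<le> B" using B True by auto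
          have b: "\<bar>max 0 (min 1 (M + 1 - norm x))\<bar> \<le> 1" by auto
          have "\<bar>f x\<bar> * \<bar>max 0 (min 1 (M + 1 - norm x))\<bar> \<le> B * 1"
            by (rule mult_mono[OF a b]) (use B0 in auto)
          then show ?thesis unfolding y g_def by (simp add: abs_mult)
        next
          case False then show ?thesis using B0 unfolding y g_def by auto
        qed
      qed
      have "(\<lambda>n. integral\<^sup>L (\<sigma>s n) g) \<longlonglongrightarrow> integral\<^sup>L \<sigma> g"
        using s(3) gc gb by (auto simp: weak_conv_bc_def)
      then obtain N where N: "\<forall>n\<ge>N. norm (integral\<^sup>L (\<sigma>s n) g - integral\<^sup>L \<sigma> g) < e / 2"
        using LIMSEQ_D[of _ _ "e/2"] e by (meson half_gt_zero)
      show "\<exists>no. \<forall>n\<ge>no. norm (integral\<^sup>L (\<sigma>s n) f - integral\<^sup>L \<sigma> f) < e"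
      proof (intro exI allI impI)
        fix n assume "n \<ge> N"
        then have a: "\<bar>integral\<^sup>L (\<sigma>s n) g - integral\<^sup>L \<sigma> g\<bar> < e / 2" using N by simp
        have b: "\<bar>integral\<^sup>L (\<sigma>s n) f - integral\<^sup>L (\<sigma>s n) g\<bar> \<le> \<epsilon> * R"
          unfolding g_def by (rule key[OF _ conjunct1[OF fa] eps M B less_imp_le[OF B0]]) (use s in auto)
        have c: "\<bar>integral\<^sup>L \<sigma> f - integral\<^sup>L \<sigma> g\<bar> \<le> \<epsilon> * R"
          unfolding g_def by (rule key[OF _ conjunct1[OF fa] eps M B less_imp_le[OF B0]]) (use s in auto)
        have "\<epsilon> * R = e / 4" using R by (simp add: \<epsilon>_def)
        then show "norm (integral\<^sup>L (\<sigma>s n) f - integral\<^sup>L \<sigma> f) < e" unfolding real_norm_def by (rule tri_helper[OF a b c])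
      qed
    qed
  qed
qed

lemma yjoin_meas: "(\<lambda>y. yjoin Y y x0) \<in> borel_measurable (lebY Y)"
proof (subst borel_measurable_euclidean_space, intro ballI)
  fix b :: "real^'a" assume "b \<in> Basis"
  then obtain i where b: "b = axis i 1" by (auto simp: Basis_vec_def)
  have "(\<lambda>y. yjoin Y y x0 \<bullet> b) = (\<lambda>y. if i \<in> Y then y i else x0 $ i)"
    by (auto simp: b yjoin_def inner_axis)
  then show "(\<lambda>y. yjoin Y y x0 \<bullet> b) \<in> borel_measurable (lebY Y)"
    by (cases "i \<in> Y") (auto intro: measurable_component_singleton)
qed
lemma yproj_meas: "sets M = sets borel \<Longrightarrow> yproj Y \<in> M \<rightarrow>\<^sub>M lebY Y"
  unfolding yproj_def
  by (subst measurable_cong_sets[of _ borel _ "lebY Y"]) (auto intro!: measurable_restrict)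

lemma ycube_meas: "(\<lambda>y. indicator (ycube Y c h) y :: ennreal) \<in> borel_measurable (lebY Y)"
proof -
  have e: "ycube Y c h \<inter> space (lebY Y) = PiE Y (\<lambda>i. {c$i..c$i+h})"
    by (auto simp: ycube_def space_PiM PiE_def Pi_def)
  have "PiE Y (\<lambda>i. {c$i..c$i+h}) \<in> sets (lebY Y)"
    by (rule sets_PiM_I_finite) auto
  then have "ycube Y c h \<inter> space (lebY Y) \<in> sets (lebY Y)" using e by simp
  then show ?thesis
    by (subst borel_measurable_indicator_iff) simp
qed

lemma ennreal_tendsto0I:
  assumes "\<And>e::real. e > 0 \<Longrightarrow> eventually (\<lambda>n. f n \<le> ennreal e) F"
  shows "(f \<longlongrightarrow> (0::ennreal)) F"
proof (rule order_tendstoI)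
  fix a :: ennreal assume "a < 0" then show "eventually (\<lambda>n. a < f n) F" by simp
next
  fix a :: ennreal assume a: "0 < a"
  obtain b where b: "0 < b" "b < a" using dense[OF a] by blast
  then have bt: "b < top" using top.not_eq_extremum by fastforce
  then obtain e where e: "b = ennreal e" "e \<ge> 0" by (cases b) auto
  then have "e > 0" using b by simp
  from assms[OF this] show "eventually (\<lambda>n. f n < a) F"
    by eventually_elim (use b e in auto)
qed

lemma norm_yjoin: "norm (x - yjoin Y (yproj Y x) x0) \<le> norm (x - x0)"
  unfolding norm_vec_def
  by (rule L2_set_mono) (auto simp: yjoin_def yproj_def)

lemma yjoin_cube: "x \<in> cube c h \<Longrightarrow> x0 \<in> cube c h \<Longrightarrow> yjoin Y (yproj Y x) x0 \<in> cube c h"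
  by (auto simp: cube_def yjoin_def yproj_def)

lemma yjoin_same: "k \<in> Y \<Longrightarrow> yjoin Y (yproj Y x) x0 $ k = x $ k"
  by (auto simp: yjoin_def yproj_def)

lemma cube_net:
  assumes "d > 0"
  shows "\<exists>N. finite N \<and> N \<subseteq> cube c h \<and> (\<forall>x\<in>cube c h. \<exists>x0\<in>N. norm (x - x0) < d)"
proof -
  have "cube c h = cbox c (\<chi> i. c$i + h)" by (auto simp: cube_def mem_box_cart)
  then have "compact (cube c h)" by simp
  then have sc: "seq_compact (cube c h)" by (rule compact_imp_seq_compact)
  have "\<exists>k. finite k \<and> k \<subseteq> cube c h \<and> cube c h \<subseteq> (\<Union>x\<in>k. ball x d)"
    by (rule seq_compact_imp_totally_bounded[OF sc, rule_format, OF assms])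
  then obtain N where
    N: "finite N" "N \<subseteq> cube c h" and cov: "cube c h \<subseteq> (\<Union>x\<in>N. ball x d)" by (elim exE conjE)
  show ?thesis
  proof (intro exI conjI ballI)
    fix x assume "x \<in> cube c h"
    then obtain x0 where "x0 \<in> N" "x \<in> ball x0 d" using cov by blast
    then show "\<exists>x0\<in>N. norm (x - x0) < d" by (auto simp: dist_norm norm_minus_commute)
  qed (use N in auto)
qed

lemma modulus_delta:
  fixes \<omega> :: "real \<Rightarrow> real"
  assumes "continuous_on {0..} \<omega>" "\<omega> 0 = 0" "e > 0"
  shows "\<exists>d>0. \<forall>t. 0 \<le> t \<and> t < d \<longrightarrow> \<omega> t < e"
proof -
  from assms(1) have "\<forall>x\<in>{0..}. \<forall>e>0. \<exists>d>0. \<forall>x'\<in>{0..}. dist x' x < d \<longrightarrow> dist (\<omega> x') (\<omega> x) < e"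
    by (simp add: continuous_on_iff)
  then obtain d where "d > 0" "\<forall>x'\<in>{0..}. dist x' 0 < d \<longrightarrow> dist (\<omega> x') (\<omega> 0) < e"
    using assms(3) by (meson atLeast_iff order_refl)
  then show ?thesis using assms(2) by (intro exI[of _ d]) (auto simp: dist_real_def)
qed


lemma push_bound:
  fixes Y :: "'n::finite set" and u1 u2 :: "('n \<Rightarrow> real) \<Rightarrow> real"
  assumes mu: "\<mu> \<in> Mset Y \<gamma> c h S \<eta>" and Y: "Y \<noteq> {}"
    and etam: "\<eta> \<in> borel_measurable borel" and eta0: "\<forall>x. 0 \<le> \<eta> x"
    and u1: "u1 \<in> borel_measurable (lebY Y)" "\<forall>y. 0 \<le> u1 y"
    and u2: "u2 \<in> borel_measurable (lebY Y)" "\<forall>y. 0 \<le> u2 y"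
    and t: "t > 0" and p: "p > 0" and r: "r > 0" and pr: "1/p + 1/r = 1"
    and rdef: "r = r_exp (card Y) \<gamma>"
  shows "(\<integral>\<^sup>+ x. indicator (ycube Y c h) (yproj Y x) * ennreal (u1 (yproj Y x) + u2 (yproj Y x)) * ennreal (\<eta> x) \<partial>\<mu>)
    \<le> ennreal (t powr p) * (\<integral>\<^sup>+ y. indicator (ycube Y c h) y * ennreal (u1 y powr p + u2 y powr p) \<partial>lebY Y)
      + ennreal (2 * S powr r / t powr r)"
proof -
  from mu Y obtain \<rho> where bp: "borel_prob \<mu>" and rm: "\<rho> \<in> borel_measurable (lebY Y)" and r0: "\<forall>y. 0 \<le> \<rho> y"
    and dens: "distr (density \<mu> (\<lambda>x. ennreal (\<eta> x))) (lebY Y) (yproj Y) = density (lebY Y) (\<lambda>y. ennreal (\<rho> y))"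
    and rint: "(\<integral>\<^sup>+ y. indicator (ycube Y c h) y * ennreal (\<rho> y powr r) \<partial>lebY Y) \<le> ennreal (S powr r)"
    unfolding Mset_def rdef by blast
  have sm: "sets \<mu> = sets borel" using bp by (simp add: borel_prob_def)
  have etam': "(\<lambda>x. ennreal (\<eta> x)) \<in> borel_measurable \<mu>" using etam by (subst measurable_cong_sets[OF sm refl]) simp
  define G where "G y = indicator (ycube Y c h) y * ennreal (u1 y + u2 y)" for y
  have Gm: "G \<in> borel_measurable (lebY Y)" unfolding G_def using ycube_meas u1 u2 by measurable
  have pm: "yproj Y \<in> \<mu> \<rightarrow>\<^sub>M lebY Y" using yproj_meas[OF sm] .
  have pm': "yproj Y \<in> density \<mu> (\<lambda>x. ennreal (\<eta> x)) \<rightarrow>\<^sub>M lebY Y"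
    using yproj_meas[of "density \<mu> (\<lambda>x. ennreal (\<eta> x))"] sm by simp
  have "(\<integral>\<^sup>+ x. indicator (ycube Y c h) (yproj Y x) * ennreal (u1 (yproj Y x) + u2 (yproj Y x)) * ennreal (\<eta> x) \<partial>\<mu>)
      = (\<integral>\<^sup>+ x. ennreal (\<eta> x) * G (yproj Y x) \<partial>\<mu>)"
    by (simp add: G_def mult.commute)
  also have "\<dots> = (\<integral>\<^sup>+ x. G (yproj Y x) \<partial>density \<mu> (\<lambda>x. ennreal (\<eta> x)))"
    by (rule nn_integral_density[symmetric]) (use etam' Gm pm in auto)
  also have "\<dots> = (\<integral>\<^sup>+ y. G y \<partial>distr (density \<mu> (\<lambda>x. ennreal (\<eta> x))) (lebY Y) (yproj Y))"
    by (rule nn_integral_distr[symmetric]) (use pm' Gm in auto)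
  also have "\<dots> = (\<integral>\<^sup>+ y. ennreal (\<rho> y) * G y \<partial>lebY Y)"
    unfolding dens using rm Gm by (subst nn_integral_density) auto
  also have "\<dots> \<le> (\<integral>\<^sup>+ y. ennreal (t powr p) * (indicator (ycube Y c h) y * ennreal (u1 y powr p + u2 y powr p))
       + ennreal (2 / t powr r) * (indicator (ycube Y c h) y * ennreal (\<rho> y powr r)) \<partial>lebY Y)"
  proof (rule nn_integral_mono)
    fix y
    show "ennreal (\<rho> y) * G y \<le> ennreal (t powr p) * (indicator (ycube Y c h) y * ennreal (u1 y powr p + u2 y powr p))
       + ennreal (2 / t powr r) * (indicator (ycube Y c h) y * ennreal (\<rho> y powr r))"
    proof (cases "y \<in> ycube Y c h")
      case False then show ?thesis by (simp add: G_def)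
    next
      case True
      have a: "u1 y * \<rho> y \<le> t powr p * u1 y powr p + \<rho> y powr r / t powr r"
        by (rule young_scaled) (use u1 r0 t p r pr in auto)
      have b: "u2 y * \<rho> y \<le> t powr p * u2 y powr p + \<rho> y powr r / t powr r"
        by (rule young_scaled) (use u2 r0 t p r pr in auto)
      have "\<rho> y * (u1 y + u2 y) \<le> t powr p * (u1 y powr p + u2 y powr p) + 2 / t powr r * \<rho> y powr r"
        using a b by (simp add: algebra_simps)
      then have "ennreal (\<rho> y * (u1 y + u2 y)) \<le> ennreal (t powr p * (u1 y powr p + u2 y powr p) + 2 / t powr r * \<rho> y powr r)"
        by (rule ennreal_leI)
      then show ?thesis using True r0 u1 u2
        by (simp add: G_def ennreal_mult[symmetric] ennreal_plus[symmetric] del: ennreal_plus)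
    qed
  qed
  also have "\<dots> = ennreal (t powr p) * (\<integral>\<^sup>+ y. indicator (ycube Y c h) y * ennreal (u1 y powr p + u2 y powr p) \<partial>lebY Y)
      + ennreal (2 / t powr r) * (\<integral>\<^sup>+ y. indicator (ycube Y c h) y * ennreal (\<rho> y powr r) \<partial>lebY Y)"
  proof -
    note [measurable] = ycube_meas u1(1) u2(1) rm
    have m1: "(\<lambda>y. indicator (ycube Y c h) y * ennreal (u1 y powr p + u2 y powr p)) \<in> borel_measurable (lebY Y)"
      by measurable
    have m2: "(\<lambda>y. indicator (ycube Y c h) y * ennreal (\<rho> y powr r)) \<in> borel_measurable (lebY Y)"
      by measurable
    show ?thesis
      unfolding nn_integral_add[OF borel_measurable_times_ennreal[OF borel_measurable_const m1] borel_measurable_times_ennreal[OF borel_measurable_const m2]]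
        nn_integral_cmult[OF m1] nn_integral_cmult[OF m2] by (rule refl)
  qed
  also have "\<dots> \<le> ennreal (t powr p) * (\<integral>\<^sup>+ y. indicator (ycube Y c h) y * ennreal (u1 y powr p + u2 y powr p) \<partial>lebY Y)
      + ennreal (2 / t powr r) * ennreal (S powr r)"
    by (intro add_left_mono mult_left_mono rint) auto
  also have "ennreal (2 / t powr r) * ennreal (S powr r) = ennreal (2 * S powr r / t powr r)"
    using t by (simp add: ennreal_mult[symmetric])
  finally show ?thesis .
qed





lemma arith1:
  fixes Q c e :: real
  assumes "Q \<noteq> 0" "c + 1 \<noteq> 0" "e \<noteq> 0"
  shows "c * (2*Q / (8*(c+1)*Q/e)) = e/4 * (c/(c+1))"
proof -
  have "2*Q / (8*(c+1)*Q/e) = (2*Q*e) / (8*(c+1)*Q)" by simp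
  also have "\<dots> = (e * (2*Q)) / ((4*(c+1)) * (2*Q))" by (simp add: algebra_simps)
  also have "\<dots> = e / (4*(c+1))" using assms(1) by (rule_tac mult_divide_mult_cancel_right) simp
  finally show ?thesis by simp
qed

theorem lemma4p3:
  fixes V :: "real^'n \<Rightarrow> real"
    and Y :: "'n set"
    and \<gamma> :: real
    and a :: "'n \<Rightarrow> 'n \<Rightarrow> real^'n \<Rightarrow> (real^'n) measure \<Rightarrow> real"
    and b :: "'n \<Rightarrow> real^'n \<Rightarrow> (real^'n) measure \<Rightarrow> real"
    and R S h :: real and c :: "real^'n" and \<eta> :: "real^'n \<Rightarrow> real"
    and \<sigma>s :: "nat \<Rightarrow> (real^'n) measure" and \<sigma> :: "(real^'n) measure"
  assumes V: "C2 V" "\<forall>x. 0 \<le> V x" "filterlim V at_top at_infinity"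
    and coeff: "coeff_ok a b"
    and gamma: "\<gamma> > 0"
    and H1: "H1_1 V Y a" "H1_2 V a b" "H1_3 V Y a b"
    and H2: "H2 V Y \<gamma> a b"
    and RS: "R > 0" "S > 0"
    and K: "h > 0"
    and eta: "z_cutoff Y \<eta>" "\<forall>x\<in>zcube Y c h. \<eta> x = 1"
    and conv: "\<forall>n. \<sigma>s n \<in> PR V R" "\<sigma> \<in> PR V R" "weak_conv_bc \<sigma>s \<sigma>"
  shows "\<forall>i j. (\<lambda>n. SUP \<mu>\<in>Mset Y \<gamma> c h S \<eta>.
            \<integral>\<^sup>+ x. indicator (cube c h) x *
               ennreal (\<bar>a i j x (\<sigma>s n) - a i j x \<sigma>\<bar> + \<bar>b i x (\<sigma>s n) - b i x \<sigma>\<bar>) \<partial>\<mu>)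
          \<longlonglongrightarrow> 0"
proof (intro allI)
  fix i j
  have Vc: "continuous_on UNIV V" using C2_cont[OF V(1)] .
  have VW: "Vweak_conv V \<sigma>s \<sigma>" using vweak[OF Vc V(2) V(3) conv RS(1)] .
  have cj: "(\<forall>n. \<sigma>s n \<in> PR V R) \<and> \<sigma> \<in> PR V R \<and> Vweak_conv V \<sigma>s \<sigma>" using conv VW by simp
  note H2i = H2[unfolded H2_def, THEN spec[of _ R], THEN spec[of _ \<sigma>s], THEN spec[of _ \<sigma>], THEN mp, OF cj,
     THEN spec[of _ i], THEN spec[of _ j]]
  have bps: "borel_prob (\<sigma>s n)" for n using conv(1) by (simp add: PR_def)
  have bp: "borel_prob \<sigma>" using conv(2) by (simp add: PR_def)
  obtain \<omega> :: "real \<Rightarrow> real" where om: "continuous_on {0..} \<omega>" "\<forall>t\<ge>0. 0 \<le> \<omega> t" "\<omega> 0 = 0"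
    and omb: "\<And>x x' \<mu>. x \<in> cube c h \<Longrightarrow> x' \<in> cube c h \<Longrightarrow> \<mu> \<in> PR V R \<Longrightarrow> (\<forall>k\<in>Y. x$k = x'$k) \<Longrightarrow>
         \<bar>a i j x \<mu> - a i j x' \<mu>\<bar> + \<bar>b i x \<mu> - b i x' \<mu>\<bar> \<le> \<omega> (norm (x - x'))"
  proof -
    note ex = H1(3)[unfolded H1_3_def, THEN spec[of _ R], THEN spec[of _ c], THEN spec[of _ h], THEN mp, OF K]
    then obtain \<omega> :: "real \<Rightarrow> real" where A: "continuous_on {0..} \<omega>" "\<forall>t\<ge>0. 0 \<le> \<omega> t" "\<omega> 0 = 0"
      and B: "\<forall>i j. \<forall>x\<in>cube c h. \<forall>x'\<in>cube c h. \<forall>\<mu>\<in>PR V R. (\<forall>k\<in>Y. x$k = x'$k) \<longrightarrow>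
         \<bar>a i j x \<mu> - a i j x' \<mu>\<bar> + \<bar>b i x \<mu> - b i x' \<mu>\<bar> \<le> \<omega> (norm (x - x'))"
      by (elim exE conjE) 
    show ?thesis using that[OF A] B by blast
  qed
  define g where "g n x = \<bar>a i j x (\<sigma>s n) - a i j x \<sigma>\<bar> + \<bar>b i x (\<sigma>s n) - b i x \<sigma>\<bar>" for n x
  have g0: "0 \<le> g n x" for n x by (simp add: g_def)
  have osc: "g n x \<le> g n x' + 2 * \<omega> (norm (x - x'))"
    if "x \<in> cube c h" "x' \<in> cube c h" "\<forall>k\<in>Y. x$k = x'$k" for n x x'
  proof -
    have w1: "\<bar>a i j x (\<sigma>s n) - a i j x' (\<sigma>s n)\<bar> + \<bar>b i x (\<sigma>s n) - b i x' (\<sigma>s n)\<bar> \<le> \<omega> (norm (x - x'))"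
      using omb[OF that(1,2) _ that(3)] conv(1) by blast
    have w2: "\<bar>a i j x \<sigma> - a i j x' \<sigma>\<bar> + \<bar>b i x \<sigma> - b i x' \<sigma>\<bar> \<le> \<omega> (norm (x - x'))"
      using omb[OF that(1,2) _ that(3)] conv(2) by blast
    show ?thesis using w1 w2 unfolding g_def abs_le_iff abs_less_iff
      by (smt (verit) abs_ge_self abs_ge_minus_self)
  qed
  have main: "\<forall>\<^sub>F n in sequentially. (SUP \<mu>\<in>Mset Y \<gamma> c h S \<eta>.
            \<integral>\<^sup>+ x. indicator (cube c h) x * ennreal (g n x) \<partial>\<mu>) \<le> ennreal e" if e: "e > 0" for e
  proof -
    define \<epsilon> where "\<epsilon> = e / 4"
    have eps: "\<epsilon> > 0" using e by (simp add: \<epsilon>_def)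
    obtain d where d: "d > 0" "\<forall>t. 0 \<le> t \<and> t < d \<longrightarrow> \<omega> t < \<epsilon>"
      using modulus_delta[OF om(1) om(3) eps] by (elim exE conjE)
    obtain N where N: "finite N" "N \<subseteq> cube c h" "\<forall>x\<in>cube c h. \<exists>x0\<in>N. norm (x - x0) < d"
      using cube_net[where c=c and h=h, OF d(1)] by blast
    have near: "\<exists>x0\<in>N. g n x \<le> g n (yjoin Y (yproj Y x) x0) + 2 * \<epsilon>" if x: "x \<in> cube c h" for n x
    proof -
      obtain x0 where x0: "x0 \<in> N" "norm (x - x0) < d" using N(3) x by blast
      have x0c: "x0 \<in> cube c h" using x0 N(2) by blast
      have "g n x \<le> g n (yjoin Y (yproj Y x) x0) + 2 * \<omega> (norm (x - yjoin Y (yproj Y x) x0))"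
        by (rule osc[OF x yjoin_cube[OF x x0c]]) (simp add: yjoin_same)
      moreover have "\<omega> (norm (x - yjoin Y (yproj Y x) x0)) < \<epsilon>"
        using d(2) norm_yjoin[of x Y x0] x0(2) by simp
      ultimately show ?thesis using x0(1) by force
    qed
    show ?thesis
    proof (cases "Y = {}")
      case True
      have yj: "yjoin Y (yproj Y x) x0 = x0" for x x0 using True by (simp add: yjoin_def vec_eq_iff)
      have lim: "(\<lambda>n. g n x) \<longlonglongrightarrow> 0" for x using H2i True by (simp add: g_def)
      have "\<forall>\<^sub>F n in sequentially. \<forall>x0\<in>N. g n x0 < \<epsilon>"
        by (rule eventually_ball_finite[OF N(1)]) (use order_tendstoD(2)[OF lim eps] in blast)
      then show ?thesis
      proof eventually_elim
        case (elim n)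
        show ?case
        proof (rule SUP_least)
          fix \<mu> assume "\<mu> \<in> Mset Y \<gamma> c h S \<eta>"
          then have "prob_space \<mu>" by (simp add: Mset_def borel_prob_def)
          then interpret prob_space \<mu> .
          have "(\<integral>\<^sup>+ x. indicator (cube c h) x * ennreal (g n x) \<partial>\<mu>) \<le> (\<integral>\<^sup>+ x. ennreal e \<partial>\<mu>)"
          proof (rule nn_integral_mono)
            fix x
            show "indicator (cube c h) x * ennreal (g n x) \<le> ennreal e"
            proof (cases "x \<in> cube c h")
              case True
              then obtain x0 where x0: "x0 \<in> N" "g n x \<le> g n x0 + 2 * \<epsilon>" using near[of x n] yj by auto
              have "g n x0 < \<epsilon>" using elim x0(1) by blast
              then have "g n x \<le> e" using x0(2) e unfolding \<epsilon>_def by linarith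
              then show ?thesis using True by (simp add: ennreal_leI)
            qed simp
          qed
          also have "\<dots> = ennreal e" by (simp add: emeasure_space_1)
          finally show "(\<integral>\<^sup>+ x. indicator (cube c h) x * ennreal (g n x) \<partial>\<mu>) \<le> ennreal e" .
        qed
      qed
    next
      case False
      define p where "p = p_exp (card Y) \<gamma>"
      define r where "r = r_exp (card Y) \<gamma>"
      have fY: "finite Y" by simp
      have p: "p > 0" and r: "r > 0" and pr: "1/p + 1/r = 1"
        using exps[OF False fY gamma] by (simp_all add: p_def r_def)
      define cN where "cN = real (card N)"
      have cN: "cN \<ge> 0" by (simp add: cN_def)
      define t where "t = (8 * (cN + 1) * S powr r / e) powr (1/r)"
      have tpos: "t > 0" using RS e cN by (simp add: t_def)
      have tr: "t powr r = 8 * (cN + 1) * S powr r / e"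
        using RS e cN r by (simp add: t_def powr_powr)
      define \<eta>' where "\<eta>' = e / (4 * (cN + 1) * t powr p)"
      have eta': "\<eta>' > 0" using e cN tpos by (simp add: \<eta>'_def)
      define J where "J n x0 = (\<integral>\<^sup>+ y. indicator (ycube Y c h) y *
              ennreal (\<bar>a i j (yjoin Y y x0) \<sigma> - a i j (yjoin Y y x0) (\<sigma>s n)\<bar> powr p
                     + \<bar>b i (yjoin Y y x0) \<sigma> - b i (yjoin Y y x0) (\<sigma>s n)\<bar> powr p) \<partial>lebY Y)" for n x0
      have Jlim: "(\<lambda>n. J n x0) \<longlonglongrightarrow> 0" for x0
        using H2i False K unfolding J_def p_def by simp
      have "\<forall>\<^sub>F n in sequentially. \<forall>x0\<in>N. J n x0 < ennreal \<eta>'"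
        by (rule eventually_ball_finite[OF N(1)]) (use order_tendstoD(2)[OF Jlim] eta' in simp)
      then show ?thesis
      proof eventually_elim
        case (elim n)
        show ?case
        proof (rule SUP_least)
          fix \<mu> assume mu: "\<mu> \<in> Mset Y \<gamma> c h S \<eta>"
          then have "prob_space \<mu>" and smu: "sets \<mu> = sets borel" by (simp_all add: Mset_def borel_prob_def)
          then interpret prob_space \<mu> by simp
          have etam: "\<eta> \<in> borel_measurable borel"
            using smooth_cont eta(1) by (auto simp: z_cutoff_def intro: borel_measurable_continuous_onI)
          have eta0: "\<forall>x. 0 \<le> \<eta> x" using eta(1) by (simp add: z_cutoff_def)
          define u1 where "u1 x0 y = \<bar>a i j (yjoin Y y x0) \<sigma> - a i j (yjoin Y y x0) (\<sigma>s n)\<bar>" for x0 y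
          define u2 where "u2 x0 y = \<bar>b i (yjoin Y y x0) \<sigma> - b i (yjoin Y y x0) (\<sigma>s n)\<bar>" for x0 y
          have am: "(\<lambda>x. a i j x \<mu>') \<in> borel_measurable borel" "(\<lambda>x. b i x \<mu>') \<in> borel_measurable borel"
            if "borel_prob \<mu>'" for \<mu>' using coeff that unfolding coeff_ok_def by blast+
          have u1m: "u1 x0 \<in> borel_measurable (lebY Y)" for x0
            unfolding u1_def
            using measurable_compose[OF yjoin_meas am(1)[OF bp]] measurable_compose[OF yjoin_meas am(1)[OF bps]]
            by measurable
          have u2m: "u2 x0 \<in> borel_measurable (lebY Y)" for x0
            unfolding u2_def
            using measurable_compose[OF yjoin_meas am(2)[OF bp]] measurable_compose[OF yjoin_meas am(2)[OF bps]]
            by measurable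
          have gu: "g n (yjoin Y y x0) = u1 x0 y + u2 x0 y" for y x0
            by (simp add: g_def u1_def u2_def abs_minus_commute)
          define F where "F x0 x = indicator (ycube Y c h) (yproj Y x) * ennreal (u1 x0 (yproj Y x) + u2 x0 (yproj Y x)) * ennreal (\<eta> x)" for x0 x
          have Fm: "F x0 \<in> borel_measurable \<mu>" for x0
          proof -
            note [measurable] = ycube_meas u1m u2m yproj_meas[OF smu]
            have "\<eta> \<in> borel_measurable \<mu>" using etam by (subst measurable_cong_sets[OF smu refl])
            note [measurable] = this
            show ?thesis unfolding F_def by measurable
          qed
          have pt: "indicator (cube c h) x * ennreal (g n x) \<le> (\<Sum>x0\<in>N. F x0 x) + ennreal (2 * \<epsilon>)" for x
          proof (cases "x \<in> cube c h")
            case True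
            obtain x0 where x0: "x0 \<in> N" "g n x \<le> g n (yjoin Y (yproj Y x) x0) + 2 * \<epsilon>"
              using near[OF True] by blast
            have yc: "yproj Y x \<in> ycube Y c h" using True by (auto simp: cube_def ycube_def yproj_def)
            have "x \<in> zcube Y c h" using True by (auto simp: cube_def zcube_def)
            then have e1: "\<eta> x = 1" using eta(2) by blast
            have "F x0 x = ennreal (g n (yjoin Y (yproj Y x) x0))"
              unfolding F_def gu using yc e1 by simp
            then have "ennreal (g n (yjoin Y (yproj Y x) x0)) \<le> (\<Sum>x0\<in>N. F x0 x)"
              using member_le_sum[of x0 N "\<lambda>x0. F x0 x"] x0(1) N(1) by simp
            moreover have "ennreal (g n x) \<le> ennreal (g n (yjoin Y (yproj Y x) x0)) + ennreal (2 * \<epsilon>)"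
              using x0(2) eps g0 by (simp add: ennreal_plus[symmetric] del: ennreal_plus)
            ultimately show ?thesis using True by (simp add: add_right_mono order_trans)
          qed simp
          have "(\<integral>\<^sup>+ x. indicator (cube c h) x * ennreal (g n x) \<partial>\<mu>) \<le> (\<integral>\<^sup>+ x. (\<Sum>x0\<in>N. F x0 x) + ennreal (2 * \<epsilon>) \<partial>\<mu>)"
            by (rule nn_integral_mono) (rule pt)
          also have "\<dots> = (\<Sum>x0\<in>N. integral\<^sup>N \<mu> (F x0)) + ennreal (2 * \<epsilon>)"
            using Fm by (subst nn_integral_add) (auto simp: nn_integral_sum emeasure_space_1)
          also have "\<dots> \<le> (\<Sum>x0\<in>N. ennreal (t powr p * \<eta>' + 2 * S powr r / t powr r)) + ennreal (2 * \<epsilon>)"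
          proof (intro add_right_mono sum_mono)
            fix x0 assume x0: "x0 \<in> N"
            have "integral\<^sup>N \<mu> (F x0) \<le> ennreal (t powr p) * J n x0 + ennreal (2 * S powr r / t powr r)"
              unfolding F_def J_def
              using push_bound[OF mu False etam eta0 u1m _ u2m _ tpos p r pr r_def]
              by (simp add: u1_def u2_def)
            also have "\<dots> \<le> ennreal (t powr p) * ennreal \<eta>' + ennreal (2 * S powr r / t powr r)"
              using elim x0 by (intro add_right_mono mult_left_mono) auto
            also have "\<dots> = ennreal (t powr p * \<eta>' + 2 * S powr r / t powr r)"
              using eta' tpos RS by (simp add: ennreal_mult ennreal_plus)
            finally show "integral\<^sup>N \<mu> (F x0) \<le> ennreal (t powr p * \<eta>' + 2 * S powr r / t powr r)" .
          qed
          also have "\<dots> = ennreal (cN * (t powr p * \<eta>' + 2 * S powr r / t powr r) + 2 * \<epsilon>)"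
            using eta' tpos RS eps cN
            by (simp add: ennreal_plus[symmetric] ennreal_mult[symmetric] cN_def ennreal_of_nat_eq_real_of_nat del: ennreal_plus)
          also have "\<dots> \<le> ennreal e"
          proof (rule ennreal_leI)
            have a1: "cN * (t powr p * \<eta>') = e / 4 * (cN / (cN + 1))"
            proof -
              have q1: "t powr p > 0" using tpos by simp
              have q2: "cN + 1 > 0" using cN by simp
              have "cN * (t powr p * \<eta>') = cN * (t powr p / t powr p) * e / (4 * (cN + 1))"
                by (simp add: \<eta>'_def)
              also have "\<dots> = cN * e / (4 * (cN + 1))" using q1 by simp
              finally show ?thesis by simp
            qed
            have a2: "cN * (2 * S powr r / t powr r) = e / 4 * (cN / (cN + 1))"
            proof -
              have q1: "S powr r \<noteq> 0" using RS by simp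
              have q2: "cN + 1 \<noteq> 0" using cN by simp
              have q3: "e \<noteq> 0" using e by simp
              have "cN * (2 * S powr r / t powr r) = cN * (2 * S powr r / (8 * (cN + 1) * S powr r / e))"
                by (simp add: tr)
              also have "\<dots> = e / 4 * (cN / (cN + 1))"
                by (rule arith1[OF q1 q2 q3])
              finally show ?thesis .
            qed
            have a3: "e / 4 * (cN / (cN + 1)) \<le> e / 4"
            proof -
              have "cN / (cN + 1) \<le> 1" using cN by simp
              then show ?thesis using e by (intro mult_left_le) auto
            qed
            show "cN * (t powr p * \<eta>' + 2 * S powr r / t powr r) + 2 * \<epsilon> \<le> e"
            proof -
              have "cN * (t powr p * \<eta>' + 2 * S powr r / t powr r) = cN * (t powr p * \<eta>') + cN * (2 * S powr r / t powr r)"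
                by (rule distrib_left)
              then show ?thesis using a1 a2 a3 unfolding \<epsilon>_def by linarith
            qed
          qed
          finally show "(\<integral>\<^sup>+ x. indicator (cube c h) x * ennreal (g n x) \<partial>\<mu>) \<le> ennreal e" .
        qed
      qed
    qed
  qed
  have "(\<lambda>n. SUP \<mu>\<in>Mset Y \<gamma> c h S \<eta>.
            \<integral>\<^sup>+ x. indicator (cube c h) x * ennreal (g n x) \<partial>\<mu>) \<longlonglongrightarrow> 0"
    by (rule ennreal_tendsto0I) (rule main)
  then show "(\<lambda>n. SUP \<mu>\<in>Mset Y \<gamma> c h S \<eta>.
            \<integral>\<^sup>+ x. indicator (cube c h) x *
               ennreal (\<bar>a i j x (\<sigma>s n) - a i j x \<sigma>\<bar> + \<bar>b i x (\<sigma>s n) - b i x \<sigma>\<bar>) \<partial>\<mu>)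
          \<longlonglongrightarrow> 0"
    by (simp add: g_def)
qed


end
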